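(* If the ST problem for $(D_{SC},F,B)$ has a positive answer, then there exists a set cover of size $k$ for $(\mathcal U,\mathcal S)$, i.e. a $k$-element subfamily of $\mathcal S$ whose union is $\mathcal U$.
   Context: Snow Team problem (ST): given a digraph $D=(\mathcal V,\mathcal A)$ whose underlying graph is connected, and $F:\mathcal V\to\{0,1\}$, $B:\mathcal V\to\mathbb N$, with $\mathbf k_B=\sum_vB(v)$: do there exist $\mathbf k_B$ directed walks, exactly $B(v)$ of which start at each $v$, such that, letting $H$ be the subgraph consisting of the vertices and arcs of these walks, all vertices of $F^{-1}(1)$ lie in one connected component of the underlying undirected graph of $H$? Construction: $\mathcal U=\{1,\dots,n\}$, $\mathcal S=\{S_1,\dots,S_m\}$ with $S_t\subseteq\mathcal U$, $\bigcup_tS_t=\mathcal U$, and $1\le k\le m$. Write $S_t=\{x_1<\dots<x_{\ell(t)}\}$ and $I_i=\{j: i\in S_j\}$. The digraph $D_{SC}$ has vertices $u_i$ ($i\in\mathcal U$); $u_{i,j},u'_{i,j},v_{i,j},v'_{i,j}$ ($i\in\mathcal U$, $j\in I_i$); and $z,z_1,\dots,z_k$. Its arcs are those of the vertical paths $P_{i,j}=(u_{i,j},u_i,u'_{i,j},v_{i,j},v'_{i,j})$ ($i\in\mathcal U,j\in I_i$), of the horizontal paths $P^h_t=(z,v_{x_1,t},v_{x_2,t},\dots,v_{x_{\ell(t)},t})$ ($t\in\{1,\dots,m\}$, with $x_1<\dots<x_{\ell(t)}$ the elements of $S_t$), and the arcs $(z_l,z)$ for $l=1,\dots,k$. Set $F(v)=1$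 for all vertices $v$, and $B(v)=1$ if $v$ is a source of $D_{SC}$ (i.e. $v\in\{u_{i,j}\}\cup\{z_1,\dots,z_k\}$) and $B(v)=0$ otherwise. *)

theory Defs
  imports Main
begin

definition is_walk :: "'v set \<Rightarrow> ('v \<times> 'v) set \<Rightarrow> 'v list \<Rightarrow> bool" where
  "is_walk V A w \<longleftrightarrow> w \<noteq> [] \<and> set w \<subseteq> V \<and> (\<forall>i. Suc i < length w \<longrightarrow> (w ! i, w ! Suc i) \<in> A)"

definition walk_arcs :: "'v list \<Rightarrow> ('v \<times> 'v) set" where
  "walk_arcs w = set (zip w (tl w))"

definition ST_positive :: "'v set \<Rightarrow> ('v \<times> 'v) set \<Rightarrow> ('v \<Rightarrow> nat) \<Rightarrow> ('v \<Rightarrow> nat) \<Rightarrow> bool" where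
  "ST_positive V A F B \<longleftrightarrow>
    (\<exists>ws :: 'v list list.
       (\<forall>w\<in>set ws. is_walk V A w) \<and>
       (\<forall>v\<in>V. length (filter (\<lambda>w. hd w = v) ws) = B v) \<and>
       (let HV = (\<Union>w\<in>set ws. set w); HA = (\<Union>w\<in>set ws. walk_arcs w) in
        \<forall>x\<in>V. \<forall>y\<in>V. F x = 1 \<longrightarrow> F y = 1 \<longrightarrow>
          x \<in> HV \<and> y \<in> HV \<and> (x, y) \<in> (HA \<union> HA\<inverse>)\<^sup>*))"

datatype vtx = U nat | Uij nat nat | U'ij nat nat | Vij nat nat | V'ij nat nat | Z | Zl nat

definition Iset :: "nat \<Rightarrow> (nat \<Rightarrow> nat set) \<Rightarrow> nat \<Rightarrow> nat set" where
  "Iset m S i = {j \<in> {1..m}. i \<in> S j}"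

definition DSC_V :: "nat \<Rightarrow> nat \<Rightarrow> (nat \<Rightarrow> nat set) \<Rightarrow> nat \<Rightarrow> vtx set" where
  "DSC_V n m S k =
     {U i | i. i \<in> {1..n}}
     \<union> {Uij i j | i j. i \<in> {1..n} \<and> j \<in> Iset m S i}
     \<union> {U'ij i j | i j. i \<in> {1..n} \<and> j \<in> Iset m S i}
     \<union> {Vij i j | i j. i \<in> {1..n} \<and> j \<in> Iset m S i}
     \<union> {V'ij i j | i j. i \<in> {1..n} \<and> j \<in> Iset m S i}
     \<union> {Z} \<union> {Zl l | l. l \<in> {1..k}}"

definition consec :: "nat set \<Rightarrow> nat \<Rightarrow> nat \<Rightarrow> bool" where
  "consec St x y \<longleftrightarrow> x \<in> St \<and> y \<in> St \<and> x < y \<and> (\<forall>w\<in>St. \<not> (x < w \<and> w < y))"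

definition DSC_A :: "nat \<Rightarrow> nat \<Rightarrow> (nat \<Rightarrow> nat set) \<Rightarrow> nat \<Rightarrow> (vtx \<times> vtx) set" where
  "DSC_A n m S k =
     \<comment> \<open>vertical paths P_{i,j} = (u_{i,j}, u_i, u'_{i,j}, v_{i,j}, v'_{i,j})\<close>
     {(Uij i j, U i) | i j. i \<in> {1..n} \<and> j \<in> Iset m S i}
     \<union> {(U i, U'ij i j) | i j. i \<in> {1..n} \<and> j \<in> Iset m S i}
     \<union> {(U'ij i j, Vij i j) | i j. i \<in> {1..n} \<and> j \<in> Iset m S i}
     \<union> {(Vij i j, V'ij i j) | i j. i \<in> {1..n} \<and> j \<in> Iset m S i}
     \<comment> \<open>horizontal paths P^h_t = (z, v_{x_1,t}, ..., v_{x_l(t),t})\<close>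
     \<union> {(Z, Vij (Min (S t)) t) | t. t \<in> {1..m} \<and> S t \<noteq> {}}
     \<union> {(Vij x t, Vij y t) | x y t. t \<in> {1..m} \<and> consec (S t) x y}
     \<comment> \<open>arcs (z_l, z)\<close>
     \<union> {(Zl l, Z) | l. l \<in> {1..k}}"

definition DSC_B :: "vtx \<Rightarrow> nat" where
  "DSC_B v = (case v of Uij _ _ \<Rightarrow> 1 | Zl _ \<Rightarrow> 1 | _ \<Rightarrow> 0)"

definition DSC_F :: "vtx \<Rightarrow> nat" where
  "DSC_F v = 1"

end

theory Submission imports Defs begin

locale stl =
  fixes n m k :: nat and S :: "nat \<Rightarrow> nat set" and ws :: "vtx list list"
  assumes Ssub: "\<forall>t\<in>{1..m}. S t \<subseteq> {1..n}"
  and walks: "\<forall>w\<in>set ws. is_walk (DSC_V n m S k) (DSC_A n m S k) w"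
  and cnt: "\<forall>v\<in>DSC_V n m S k. length (filter (\<lambda>w. hd w = v) ws) = DSC_B v"
  and conn: "\<forall>x\<in>DSC_V n m S k. \<forall>y\<in>DSC_V n m S k. x \<in> (\<Union>w\<in>set ws. set w) \<and> y \<in> (\<Union>w\<in>set ws. set w)
     \<and> (x,y) \<in> ((\<Union>w\<in>set ws. walk_arcs w) \<union> (\<Union>w\<in>set ws. walk_arcs w)\<inverse>)\<^sup>*"
begin

abbreviation "VV \<equiv> DSC_V n m S k"
abbreviation "AA \<equiv> DSC_A n m S k"
abbreviation "HA \<equiv> \<Union>w\<in>set ws. walk_arcs w"

lemma no_in_Uij: "(a, Uij i j) \<notin> AA" by (auto simp: DSC_A_def)
lemma no_in_Zl: "(a, Zl l) \<notin> AA" by (auto simp: DSC_A_def)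
lemma in_U: "(a, U i) \<in> AA \<Longrightarrow> \<exists>j. a = Uij i j" by (auto simp: DSC_A_def)
lemma in_U': "(a, U'ij i j) \<in> AA \<Longrightarrow> a = U i" by (auto simp: DSC_A_def)
lemma in_V: "(a, Vij i j) \<in> AA \<Longrightarrow> a = U'ij i j \<or> (a = Z \<and> j \<in> {1..m} \<and> S j \<noteq> {} \<and> i = Min (S j))
   \<or> (\<exists>x. a = Vij x j \<and> consec (S j) x i)" by (auto simp: DSC_A_def)
lemma in_V': "(a, V'ij i j) \<in> AA \<Longrightarrow> a = Vij i j" by (auto simp: DSC_A_def)
lemma out_V': "(V'ij i j, b) \<notin> AA" by (auto simp: DSC_A_def)
lemma out_V: "(Vij a t, b) \<in> AA \<Longrightarrow> b = V'ij a t \<or> (\<exists>y. b = Vij y t \<and> consec (S t) a y)"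
  by (auto simp: DSC_A_def)
lemma in_Z: "(a, Z) \<in> AA \<Longrightarrow> \<exists>l. a = Zl l" by (auto simp: DSC_A_def)

lemma arc_pos: "w \<in> set ws \<Longrightarrow> Suc q < length w \<Longrightarrow> (w!q, w!Suc q) \<in> AA"
  using walks by (auto simp: is_walk_def)

lemma walk_V: "w \<in> set ws \<Longrightarrow> q < length w \<Longrightarrow> w!q \<in> VV"
  using walks nth_mem unfolding is_walk_def by blast

lemma arc_HA: "w \<in> set ws \<Longrightarrow> Suc q < length w \<Longrightarrow> (w!q, w!Suc q) \<in> HA"
proof -
  assume a: "w \<in> set ws" "Suc q < length w"
  have "(w!q, w!Suc q) \<in> set (zip w (tl w))"
    unfolding in_set_zip using a(2) by (intro exI[of _ q]) (auto simp: nth_tl)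
  thus ?thesis using a(1) unfolding walk_arcs_def by blast
qed

lemma HA_sub: "(a,b) \<in> HA \<Longrightarrow> \<exists>w\<in>set ws. \<exists>q. Suc q < length w \<and> a = w!q \<and> b = w!Suc q"
proof -
  assume "(a,b) \<in> HA"
  then obtain w where w: "w \<in> set ws" "(a,b) \<in> set (zip w (tl w))" unfolding walk_arcs_def by blast
  then obtain q where "w!q = a" "tl w ! q = b" "q < length w" "q < length (tl w)"
    unfolding in_set_zip by auto
  thus ?thesis using w(1) by (intro bexI[OF _ w(1)] exI[of _ q]) (auto simp: nth_tl)
qed

lemma HA_AA: "(a,b) \<in> HA \<Longrightarrow> (a,b) \<in> AA"
  using HA_sub arc_pos by blast

lemma hd_src: "w \<in> set ws \<Longrightarrow> (\<exists>i j. w!0 = Uij i j) \<or> (\<exists>l. w!0 = Zl l)"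
proof -
  assume w: "w \<in> set ws"
  have ne: "w \<noteq> []" using walks w by (auto simp: is_walk_def)
  have hv: "hd w \<in> VV" using walks w ne hd_in_set unfolding is_walk_def by blast
  have "length (filter (\<lambda>x. hd x = hd w) ws) = DSC_B (hd w)" using cnt hv by blast
  moreover have "length (filter (\<lambda>x. hd x = hd w) ws) > 0" using w
    by (metis (mono_tags, lifting) filter_empty_conv length_greater_0_conv)
  ultimately have "DSC_B (hd w) \<noteq> 0" by simp
  thus ?thesis using ne by (cases "hd w") (auto simp: DSC_B_def hd_conv_nth)
qed

lemma pos0: "w \<in> set ws \<Longrightarrow> q < length w \<Longrightarrow> w!q = Uij i j \<or> w!q = Zl l \<Longrightarrow> q = 0"
proof (rule ccontr)
  assume a: "w \<in> set ws" "q < length w" "w!q = Uij i j \<or> w!q = Zl l" "q \<noteq> 0"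
  then obtain q' where q: "q = Suc q'" by (cases q) auto
  have "(w!q', w!q) \<in> AA" using arc_pos a q by auto
  thus False using a(3) no_in_Uij no_in_Zl by auto
qed

lemma visitU': assumes w: "w \<in> set ws" and q: "q < length w" "w!q = U'ij b j"
  shows "q = 2 \<and> w!1 = U b \<and> (\<exists>j'. w!0 = Uij b j')"
proof -
  have "q \<noteq> 0" proof assume "q = 0" with hd_src[OF w] q show False by auto qed
  then obtain q1 where q1: "q = Suc q1" by (cases q) auto
  have "(w!q1, w!q) \<in> AA" using arc_pos[OF w, of q1] q q1 by auto
  hence u: "w!q1 = U b" using in_U' q by auto
  have "q1 \<noteq> 0" proof assume "q1 = 0" with hd_src[OF w] u show False by auto qed
  then obtain q2 where q2: "q1 = Suc q2" by (cases q1) auto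
  have "(w!q2, w!q1) \<in> AA" using arc_pos[OF w, of q2] q q1 q2 by auto
  then obtain j' where j': "w!q2 = Uij b j'" using in_U u by force
  have "q2 = 0" using pos0[OF w _ disjI1[OF j']] q q1 q2 by auto
  thus ?thesis using q1 q2 u j' by auto
qed

lemma VV_iff:
  "Uij b j \<in> VV \<longleftrightarrow> b \<in> {1..n} \<and> j \<in> Iset m S b"
  "U'ij b j \<in> VV \<longleftrightarrow> b \<in> {1..n} \<and> j \<in> Iset m S b"
  "Vij b j \<in> VV \<longleftrightarrow> b \<in> {1..n} \<and> j \<in> Iset m S b"
  "V'ij b j \<in> VV \<longleftrightarrow> b \<in> {1..n} \<and> j \<in> Iset m S b"
  "U b \<in> VV \<longleftrightarrow> b \<in> {1..n}"
  "Zl l \<in> VV \<longleftrightarrow> l \<in> {1..k}"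
  "Z \<in> VV"
  by (auto simp: DSC_V_def)

lemma card_start: "v \<in> VV \<Longrightarrow> card {p. p < length ws \<and> hd (ws!p) = v} = DSC_B v"
  using cnt length_filter_conv_card[of "\<lambda>w. hd w = v" ws] by auto

lemma inHV: "v \<in> VV \<Longrightarrow> \<exists>p<length ws. v \<in> set (ws!p)"
  using conn by (metis UN_E in_set_conv_nth)

lemma visitU'_idx: assumes p: "p < length ws" and u: "U'ij b j \<in> set (ws!p)"
  shows "(ws!p)!2 = U'ij b j \<and> (\<exists>j'\<in>Iset m S b. hd (ws!p) = Uij b j') \<and> b \<in> {1..n}"
proof -
  have w: "ws!p \<in> set ws" using p by simp
  obtain q where q: "q < length (ws!p)" "(ws!p)!q = U'ij b j" using u by (metis in_set_conv_nth)
  have r: "q = 2 \<and> (ws!p)!1 = U b \<and> (\<exists>j'. (ws!p)!0 = Uij b j')" using visitU'[OF w q] .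
  then obtain j' where j': "(ws!p)!0 = Uij b j'" by blast
  have "0 < length (ws!p)" using q by auto
  hence "(ws!p)!0 \<in> VV" using walk_V[OF w] by blast
  hence "b \<in> {1..n} \<and> j' \<in> Iset m S b" using j' VV_iff by simp
  moreover have "ws!p \<noteq> []" using q by auto
  hence "hd (ws!p) = (ws!p)!0" by (simp add: hd_conv_nth)
  ultimately show ?thesis using r q j' by auto
qed

lemma U'uniq: assumes p: "p < length ws" "p' < length ws"
  and u: "U'ij b j \<in> set (ws!p)" "U'ij b j \<in> set (ws!p')"
  shows "p = p'"
proof -
  define I where "I = Iset m S b"
  have bn: "b \<in> {1..n}" using visitU'_idx[OF p(1) u(1)] by blast
  have finI: "finite I" unfolding I_def Iset_def by simp
  define P where "P = {p. p < length ws \<and> (\<exists>j'\<in>I. hd (ws!p) = Uij b j')}"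
  have PU: "P = (\<Union>j'\<in>I. {p. p < length ws \<and> hd (ws!p) = Uij b j'})" unfolding P_def by auto
  have finP: "finite P" unfolding P_def by simp
  have "card P \<le> (\<Sum>j'\<in>I. card {p. p < length ws \<and> hd (ws!p) = Uij b j'})"
    unfolding PU by (rule card_UN_le[OF finI])
  also have "\<dots> = (\<Sum>j'\<in>I. 1)"
  proof (rule sum.cong)
    fix x assume "x \<in> I"
    thus "card {p. p < length ws \<and> hd (ws!p) = Uij b x} = 1"
      using card_start[of "Uij b x"] VV_iff(1)[of b x] bn by (simp add: I_def DSC_B_def)
  qed simp
  finally have cP: "card P \<le> card I" by simp
  have ex: "\<forall>jj\<in>I. \<exists>q. q < length ws \<and> U'ij b jj \<in> set (ws!q)"
  proof
    fix jj assume "jj \<in> I"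
    hence "U'ij b jj \<in> VV" using VV_iff(2)[of b jj] bn unfolding I_def by simp
    thus "\<exists>q. q < length ws \<and> U'ij b jj \<in> set (ws!q)" using inHV by blast
  qed
  then obtain c where c: "\<forall>jj\<in>I. c jj < length ws \<and> U'ij b jj \<in> set (ws!(c jj))"
    using bchoice[OF ex] by blast
  have inP: "q \<in> P" if q: "q < length ws" "U'ij b jj \<in> set (ws!q)" for q jj
  proof -
    have "\<exists>j'\<in>Iset m S b. hd (ws!q) = Uij b j'" using visitU'_idx[OF q] by blast
    thus ?thesis using q(1) unfolding P_def I_def by blast
  qed
  have cP2: "c ` I \<subseteq> P"
  proof
    fix y assume "y \<in> c ` I"
    then obtain x where "x \<in> I" "y = c x" by blast
    thus "y \<in> P" using c inP by blast
  qed
  have injc: "inj_on c I"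
  proof (rule inj_onI)
    fix x y assume xy: "x \<in> I" "y \<in> I" "c x = c y"
    from c xy(1) have a1: "c x < length ws" "U'ij b x \<in> set (ws!(c x))" by auto
    have 1: "(ws!(c x))!2 = U'ij b x" using visitU'_idx[OF a1] by blast
    from c xy(2) have a2: "c y < length ws" "U'ij b y \<in> set (ws!(c y))" by auto
    have 2: "(ws!(c y))!2 = U'ij b y" using visitU'_idx[OF a2] by blast
    have "U'ij b x = U'ij b y" using 1 2 xy(3) by metis
    thus "x = y" by simp
  qed
  have "card (c ` I) = card I" using card_image[OF injc] .
  hence eq: "c ` I = P" using card_seteq[OF finP cP2] cP by simp
  have "\<And>q. q < length ws \<Longrightarrow> U'ij b j \<in> set (ws!q) \<Longrightarrow> \<exists>jj\<in>I. q = c jj \<and> jj = j"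
  proof -
    fix q assume q: "q < length ws" "U'ij b j \<in> set (ws!q)"
    have "q \<in> c ` I" using inP[OF q] eq by simp
    then obtain jj where jj: "jj \<in> I" "q = c jj" by blast
    from c jj have a1: "q < length ws" "U'ij b jj \<in> set (ws!q)" by auto
    have 1: "(ws!q)!2 = U'ij b jj" using visitU'_idx[OF a1] by blast
    have "(ws!q)!2 = U'ij b j" using visitU'_idx[OF q] by blast
    thus "\<exists>jj\<in>I. q = c jj \<and> jj = j" using jj 1 by auto
  qed
  from this[OF p(1) u(1)] this[OF p(2) u(2)] show ?thesis by metis
qed

lemma mono_path: assumes w: "w \<in> set ws" and q: "w!q = Vij b t"
  shows "q + d < length w \<Longrightarrow> \<exists>a\<ge>b. w!(q+d) = Vij a t \<or> w!(q+d) = V'ij a t"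
proof (induction d)
  case 0 thus ?case using q by auto
next
  case (Suc d)
  then obtain a where a: "a \<ge> b" "w!(q+d) = Vij a t \<or> w!(q+d) = V'ij a t" by auto
  have arc: "(w!(q+d), w!Suc(q+d)) \<in> AA" using arc_pos[OF w, of "q+d"] Suc.prems by simp
  show ?case
  proof (cases "w!(q+d) = Vij a t")
    case True
    with arc out_V have "w!Suc(q+d) = V'ij a t \<or> (\<exists>y. w!Suc(q+d) = Vij y t \<and> consec (S t) a y)" by simp
    thus ?thesis using a(1) unfolding consec_def by auto
  next
    case False
    with a have "w!(q+d) = V'ij a t" by auto
    with arc out_V' show ?thesis by simp
  qed
qed

lemma entry: assumes w: "w \<in> set ws"
  shows "q < length w \<Longrightarrow> w!q = Vij a t \<or> w!q = V'ij a t \<Longrightarrow> \<exists>q0 b. q0 \<le> q \<and> 0 < q0 \<and> w!q0 = Vij b t \<and>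
     (w!(q0-1) = U'ij b t \<or> (w!(q0-1) = Z \<and> t \<in> {1..m} \<and> S t \<noteq> {} \<and> b = Min (S t) \<and> (Z, Vij b t) \<in> HA))"
proof (induction q arbitrary: a rule: less_induct)
  case (less q)
  have "q \<noteq> 0" proof assume "q = 0" with hd_src[OF w] less.prems show False by auto qed
  then obtain q1 where q1: "q = Suc q1" by (cases q) auto
  have arc: "(w!q1, w!q) \<in> AA" using arc_pos[OF w, of q1] less.prems q1 by simp
  have hA: "(w!q1, w!q) \<in> HA" using arc_HA[OF w, of q1] less.prems q1 by simp
  have rec: "\<exists>q0 b. q0 \<le> q \<and> 0 < q0 \<and> w!q0 = Vij b t \<and>
     (w!(q0-1) = U'ij b t \<or> (w!(q0-1) = Z \<and> t \<in> {1..m} \<and> S t \<noteq> {} \<and> b = Min (S t) \<and> (Z, Vij b t) \<in> HA))"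
    if x: "w!q1 = Vij x t" for x
  proof -
    have "q1 < q" "q1 < length w" using q1 less.prems by auto
    then obtain q0 b where o: "q0 \<le> q1" "0 < q0" "w!q0 = Vij b t"
      "w!(q0-1) = U'ij b t \<or> (w!(q0-1) = Z \<and> t \<in> {1..m} \<and> S t \<noteq> {} \<and> b = Min (S t) \<and> (Z, Vij b t) \<in> HA)"
      using less.IH[of q1 x] x by blast
    have "q0 \<le> q" using o(1) q1 by simp
    thus ?thesis using o(2-4) by blast
  qed
  show ?case
  proof (cases "w!q = Vij a t")
    case True
    with arc in_V have c: "w!q1 = U'ij a t \<or> (w!q1 = Z \<and> t \<in> {1..m} \<and> S t \<noteq> {} \<and> a = Min (S t))
      \<or> (\<exists>x. w!q1 = Vij x t \<and> consec (S t) x a)" by simp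
    show ?thesis
    proof (cases "\<exists>x. w!q1 = Vij x t")
      case True
      then obtain x where "w!q1 = Vij x t" by blast
      thus ?thesis by (rule rec)
    next
      case False
      with c have c2: "w!q1 = U'ij a t \<or> (w!q1 = Z \<and> t \<in> {1..m} \<and> S t \<noteq> {} \<and> a = Min (S t))" by blast
      have "q - 1 = q1" "0 < q" "q \<le> q" using q1 by auto
      thus ?thesis using c2 True hA by metis
    qed
  next
    case False
    with less.prems have "w!q = V'ij a t" by auto
    with arc in_V' have "w!q1 = Vij a t" by simp
    thus ?thesis by (rule rec)
  qed
qed

lemma entry2: assumes w: "w \<in> set ws" and q: "q < length w" "w!q = Vij a t \<or> w!q = V'ij a t"
  shows "\<exists>q0 b. q0 \<le> q \<and> 0 < q0 \<and> b \<le> a \<and> w!q0 = Vij b t \<and>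
     (w!(q0-1) = U'ij b t \<or> (t \<in> {1..m} \<and> S t \<noteq> {} \<and> b = Min (S t) \<and> (Z, Vij b t) \<in> HA))"
proof -
  obtain q0 b where e: "q0 \<le> q" "0 < q0" "w!q0 = Vij b t"
     "w!(q0-1) = U'ij b t \<or> (w!(q0-1) = Z \<and> t \<in> {1..m} \<and> S t \<noteq> {} \<and> b = Min (S t) \<and> (Z, Vij b t) \<in> HA)"
    using entry[OF w q] by blast
  have eq: "q0+(q-q0) = q" using e(1) by simp
  obtain a' where a': "a' \<ge> b" "w!(q0+(q-q0)) = Vij a' t \<or> w!(q0+(q-q0)) = V'ij a' t"
    using mono_path[OF w e(3), of "q-q0"] eq q(1) by auto
  have "w!q = Vij a' t \<or> w!q = V'ij a' t" using a'(2) eq by simp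
  with q(2) have "a' = a" by auto
  hence "b \<le> a" using a'(1) by simp
  thus ?thesis using e by blast
qed

lemma entry_U: assumes t: "(Z, Vij (Min (S t)) t) \<notin> HA"
  and w: "w \<in> set ws" and q: "q < length w" "w!q = Vij a t \<or> w!q = V'ij a t"
  shows "\<exists>b\<in>S t. b \<le> a \<and> U'ij b t \<in> set w"
proof -
  obtain q0 b where e: "q0 \<le> q" "0 < q0" "b \<le> a" "w!q0 = Vij b t"
     "w!(q0-1) = U'ij b t \<or> (t \<in> {1..m} \<and> S t \<noteq> {} \<and> b = Min (S t) \<and> (Z, Vij b t) \<in> HA)"
    using entry2[OF w q] by blast
  have u: "w!(q0-1) = U'ij b t" using e(5) t by auto
  have "q0 - 1 < length w" using e(1) q(1) by simp
  hence "U'ij b t \<in> set w" using u nth_mem by metis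
  moreover have "w!q0 \<in> VV" using walk_V[OF w] e(1) q(1) by simp
  hence "b \<in> S t" using e(4) VV_iff(3)[of b t] by (simp add: Iset_def)
  ultimately show ?thesis using e(3) by blast
qed

lemma no_horiz: assumes t: "t \<in> {1..m}" and nZ: "(Z, Vij (Min (S t)) t) \<notin> HA"
  and cs: "consec (S t) x y" shows "(Vij x t, Vij y t) \<notin> HA"
proof
  assume h: "(Vij x t, Vij y t) \<in> HA"
  obtain w q where w: "w \<in> set ws" "Suc q < length w" "Vij x t = w!q" "Vij y t = w!Suc q"
    using HA_sub[OF h] by blast
  obtain ps where ps: "ps < length ws" "ws!ps = w" using w(1) by (metis in_set_conv_nth)
  have St: "S t \<subseteq> {1..n}" using Ssub t by auto
  hence finSt: "finite (S t)" by (rule finite_subset) simp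
  define X where "X = {a \<in> S t. a \<le> x}"
  have finX: "finite X" unfolding X_def using finSt by simp
  have ex: "\<forall>a\<in>X. \<exists>pb. fst pb < length ws \<and> last (ws!fst pb) = V'ij a t \<and> U'ij (snd pb) t \<in> set (ws!fst pb) \<and> snd pb \<in> X"
  proof
    fix a assume a: "a \<in> X"
    have "a \<in> S t" "a \<le> x" using a X_def by auto
    hence "V'ij a t \<in> VV" using St t VV_iff(4)[of a t] by (auto simp: Iset_def)
    then obtain p where p: "p < length ws" "V'ij a t \<in> set (ws!p)" using inHV by blast
    obtain q' where q': "q' < length (ws!p)" "(ws!p)!q' = V'ij a t" using p(2) by (metis in_set_conv_nth)
    have wp: "ws!p \<in> set ws" using p(1) by simp
    have "\<not> Suc q' < length (ws!p)"
    proof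
      assume "Suc q' < length (ws!p)"
      from arc_pos[OF wp this] q'(2) out_V' show False by simp
    qed
    hence "length (ws!p) - 1 = q'" using q'(1) by simp
    moreover have "ws!p \<noteq> []" using q'(1) by auto
    ultimately have last: "last (ws!p) = V'ij a t" using q'(2) by (simp add: last_conv_nth)
    obtain b where b: "b \<in> S t" "b \<le> a" "U'ij b t \<in> set (ws!p)" using entry_U[OF nZ wp q'(1)] q'(2) by blast
    have "b \<in> X" using b \<open>a \<le> x\<close> X_def by auto
    thus "\<exists>pb. fst pb < length ws \<and> last (ws!fst pb) = V'ij a t \<and> U'ij (snd pb) t \<in> set (ws!fst pb) \<and> snd pb \<in> X"
      using p(1) last b(3) by (intro exI[of _ "(p,b)"]) simp
  qed
  obtain f where f: "\<forall>a\<in>X. fst (f a) < length ws \<and> last (ws!fst (f a)) = V'ij a t \<and> U'ij (snd (f a)) t \<in> set (ws!fst (f a)) \<and> snd (f a) \<in> X"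
    using bchoice[OF ex] by blast
  define g where "g = (\<lambda>a. snd (f a))"
  have injg: "inj_on g X"
  proof (rule inj_onI)
    fix a a' assume aa: "a \<in> X" "a' \<in> X" "g a = g a'"
    have fa: "fst (f a) < length ws" "last (ws!fst (f a)) = V'ij a t" "U'ij (g a) t \<in> set (ws!fst (f a))"
      using f aa(1) unfolding g_def by auto
    have fa': "fst (f a') < length ws" "last (ws!fst (f a')) = V'ij a' t" "U'ij (g a) t \<in> set (ws!fst (f a'))"
      using f aa(2,3) unfolding g_def by auto
    have "fst (f a) = fst (f a')" using U'uniq[OF fa(1) fa'(1) fa(3) fa'(3)] .
    hence "V'ij a t = V'ij a' t" using fa(2) fa'(2) by metis
    thus "a = a'" by simp
  qed
  have gX: "g ` X \<subseteq> X" using f unfolding g_def by auto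
  have surj: "g ` X = X" using endo_inj_surj[OF finX gX injg] .
  have wq: "w!q = Vij x t \<or> w!q = V'ij x t" using w(3) by simp
  obtain bs where bs: "bs \<in> S t" "bs \<le> x" "U'ij bs t \<in> set w"
    using entry_U[OF nZ w(1) _ wq] w(2) by auto
  have "bs \<in> X" using bs X_def by auto
  then obtain a where a: "a \<in> X" "bs = g a" using surj by blast
  have fa: "fst (f a) < length ws" "last (ws!fst (f a)) = V'ij a t" "U'ij bs t \<in> set (ws!fst (f a))"
    using f a unfolding g_def by auto
  have "ps = fst (f a)" using U'uniq[OF ps(1) fa(1)] bs(3) ps(2) fa(3) by simp
  hence lastw: "last w = V'ij a t" using fa(2) ps(2) by simp
  have eqi: "Suc q + (length w - 1 - Suc q) = length w - 1" using w(2) by simp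
  obtain a' where a': "a' \<ge> y" "w!(Suc q + (length w - 1 - Suc q)) = Vij a' t \<or> w!(Suc q + (length w - 1 - Suc q)) = V'ij a' t"
    using mono_path[OF w(1) w(4)[symmetric], of "length w - 1 - Suc q"] eqi w(2) by (metis diff_less zero_less_one less_nat_zero_code not_less_zero length_greater_0_conv list.size(3))
  have "w \<noteq> []" using w(2) by auto
  hence "w!(length w - 1) = V'ij a t" using lastw by (simp add: last_conv_nth)
  moreover have "w!(length w - 1) = Vij a' t \<or> w!(length w - 1) = V'ij a' t" using a'(2) unfolding eqi .
  ultimately have "a' = a" by auto
  moreover have "a \<le> x" using a(1) X_def by simp
  moreover have "x < y" using cs consec_def by simp
  ultimately show False using a'(1) by simp
qed

lemma Jcard: "card {t\<in>{1..m}. S t \<noteq> {} \<and> (Z, Vij (Min (S t)) t) \<in> HA} \<le> k"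
proof -
  define J where "J = {t\<in>{1..m}. S t \<noteq> {} \<and> (Z, Vij (Min (S t)) t) \<in> HA}"
  have ex: "\<forall>t\<in>J. \<exists>p. p < length ws \<and> (\<exists>l\<in>{1..k}. hd (ws!p) = Zl l) \<and> (ws!p)!2 = Vij (Min (S t)) t"
  proof
    fix t assume "t \<in> J"
    hence h: "(Z, Vij (Min (S t)) t) \<in> HA" unfolding J_def by blast
    obtain w q where w: "w \<in> set ws" "Suc q < length w" "Z = w!q" "Vij (Min (S t)) t = w!Suc q"
      using HA_sub[OF h] by blast
    have "q \<noteq> 0" proof assume "q = 0" with hd_src[OF w(1)] w(3) show False by auto qed
    then obtain q1 where q1: "q = Suc q1" by (cases q) auto
    have "(w!q1, w!q) \<in> AA" using arc_pos[OF w(1), of q1] w(2) q1 by simp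
    then obtain l where l: "w!q1 = Zl l" using in_Z w(3) by force
    have "q1 = 0" using pos0[OF w(1) _ disjI2[OF l]] w(2) q1 by simp
    hence w0: "w!0 = Zl l" and w2: "w!2 = Vij (Min (S t)) t" using l w(4) q1 by (auto simp: numeral_2_eq_2)
    have "0 < length w" using w(2) by linarith
    hence "w!0 \<in> VV" using walk_V[OF w(1)] by blast
    hence lk: "l \<in> {1..k}" using w0 VV_iff(6) by simp
    have "w \<noteq> []" using w(2) by auto
    hence "hd w = Zl l" using w0 by (simp add: hd_conv_nth)
    moreover obtain p where "p < length ws" "ws!p = w" using w(1) by (metis in_set_conv_nth)
    ultimately show "\<exists>p. p < length ws \<and> (\<exists>l\<in>{1..k}. hd (ws!p) = Zl l) \<and> (ws!p)!2 = Vij (Min (S t)) t"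
      using lk w2 by blast
  qed
  obtain h where h: "\<forall>t\<in>J. h t < length ws \<and> (\<exists>l\<in>{1..k}. hd (ws!h t) = Zl l) \<and> (ws!h t)!2 = Vij (Min (S t)) t"
    using bchoice[OF ex] by blast
  have injh: "inj_on h J"
  proof (rule inj_onI)
    fix t t' assume tt: "t \<in> J" "t' \<in> J" "h t = h t'"
    have "(ws!h t)!2 = Vij (Min (S t)) t" using h tt(1) by blast
    moreover have "(ws!h t')!2 = Vij (Min (S t')) t'" using h tt(2) by blast
    ultimately have "Vij (Min (S t)) t = Vij (Min (S t')) t'" using tt(3) by metis
    thus "t = t'" by simp
  qed
  define Q where "Q = (\<Union>l\<in>{1..k}. {p. p < length ws \<and> hd (ws!p) = Zl l})"
  have finQ: "finite Q" unfolding Q_def by auto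
  have hQ: "h ` J \<subseteq> Q" using h unfolding Q_def by blast
  have "card Q \<le> (\<Sum>l\<in>{1..k}. card {p. p < length ws \<and> hd (ws!p) = Zl l})"
    unfolding Q_def by (rule card_UN_le) simp
  also have "\<dots> = (\<Sum>l\<in>{1..k}. 1)"
  proof (rule sum.cong)
    fix l assume "l \<in> {1..k}"
    thus "card {p. p < length ws \<and> hd (ws!p) = Zl l} = 1"
      using card_start[of "Zl l"] VV_iff(6)[of l] by (simp add: DSC_B_def)
  qed simp
  finally have "card Q \<le> k" by simp
  moreover have "card J = card (h ` J)" using card_image[OF injh] by simp
  moreover have "card (h ` J) \<le> card Q" using card_mono[OF finQ hQ] .
  ultimately show ?thesis unfolding J_def by simp
qed

end

lemma rtr_closed: "(x,y) \<in> (R \<union> R\<inverse>)\<^sup>* \<Longrightarrow> \<forall>a b. (a,b)\<in>R \<longrightarrow> (a\<in>B \<longleftrightarrow> b\<in>B) \<Longrightarrow> x\<in>B \<Longrightarrow> y\<in>B"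
  by (induction rule: rtrancl_induct) auto


theorem lemma8:
  fixes n m k :: nat and S :: "nat \<Rightarrow> nat set"
  assumes "\<forall>t\<in>{1..m}. S t \<subseteq> {1..n}"
    and "(\<Union>t\<in>{1..m}. S t) = {1..n}"
    and "1 \<le> k" and "k \<le> m"
    and "ST_positive (DSC_V n m S k) (DSC_A n m S k) DSC_F DSC_B"
  shows "\<exists>J \<subseteq> {1..m}. card J = k \<and> (\<Union>t\<in>J. S t) = {1..n}"
proof -
  obtain ws where ws: "\<forall>w\<in>set ws. is_walk (DSC_V n m S k) (DSC_A n m S k) w"
    "\<forall>v\<in>DSC_V n m S k. length (filter (\<lambda>w. hd w = v) ws) = DSC_B v"
    "\<forall>x\<in>DSC_V n m S k. \<forall>y\<in>DSC_V n m S k. x \<in> (\<Union>w\<in>set ws. set w) \<and> y \<in> (\<Union>w\<in>set ws. set w)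
     \<and> (x,y) \<in> ((\<Union>w\<in>set ws. walk_arcs w) \<union> (\<Union>w\<in>set ws. walk_arcs w)\<inverse>)\<^sup>*"
    using assms(5) unfolding ST_positive_def DSC_F_def Let_def by auto
  interpret stl n m k S ws using assms(1) ws by unfold_locales auto
  define J where "J = {t\<in>{1..m}. S t \<noteq> {} \<and> (Z, Vij (Min (S t)) t) \<in> HA}"
  have cJ: "card J \<le> k" using Jcard unfolding J_def .
  have cover: "\<exists>t\<in>J. i \<in> S t" if i: "i \<in> {1..n}" for i
  proof (rule ccontr)
    assume nc: "\<not> (\<exists>t\<in>J. i \<in> S t)"
    define Bd where "Bd = {v. v = U i \<or> (\<exists>j. v = Uij i j \<or> v = U'ij i j \<or> v = Vij i j \<or> v = V'ij i j)}"
    have zc: "Min (S t) \<noteq> i" if "t \<in> {1..m}" "S t \<noteq> {}" "(Z, Vij (Min (S t)) t) \<in> HA" for t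
    proof -
      have "t \<in> J" using that J_def by blast
      moreover have "finite (S t)" using assms(1) that(1) by (meson finite_atLeastAtMost finite_subset)
      hence "Min (S t) \<in> S t" using that(2) by (rule Min_in)
      ultimately show ?thesis using nc by blast
    qed
    have hc: "x \<noteq> i \<and> y \<noteq> i" if "t \<in> {1..m}" "consec (S t) x y" "(Vij x t, Vij y t) \<in> HA" for x y t
    proof -
      have "(Z, Vij (Min (S t)) t) \<in> HA" using no_horiz that by blast
      moreover have "x \<in> S t" "y \<in> S t" using that(2) consec_def by auto
      ultimately have "t \<in> J" using that(1) J_def by blast
      thus ?thesis using nc \<open>x \<in> S t\<close> \<open>y \<in> S t\<close> by blast
    qed
    have hc2: "x \<noteq> i \<and> y \<noteq> i" if "w \<in> set ws" "(Vij x t, Vij y t) \<in> walk_arcs w" "Suc 0 \<le> t" "t \<le> m" "consec (S t) x y" for w x y t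
      using hc[of t x y] that by auto
    have cl: "\<forall>a b. (a,b) \<in> HA \<longrightarrow> (a \<in> Bd \<longleftrightarrow> b \<in> Bd)"
    proof (intro allI impI)
      fix a b assume ab: "(a,b) \<in> HA"
      hence "(a,b) \<in> AA" by (rule HA_AA)
      thus "a \<in> Bd \<longleftrightarrow> b \<in> Bd" unfolding DSC_A_def Bd_def using zc ab by auto (metis hc2)+
    qed
    have "(U i, Z) \<in> (HA \<union> HA\<inverse>)\<^sup>*" using ws(3) VV_iff(5,7) i by blast
    from rtr_closed[OF this cl] have "Z \<in> Bd" unfolding Bd_def by simp
    thus False unfolding Bd_def by simp
  qed
  have finJ: "finite J" and Jm: "J \<subseteq> {1..m}" unfolding J_def by auto
  have "k - card J \<le> card ({1..m} - J)" using card_Diff_subset[OF finJ Jm] assms(4) by simp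
  then obtain T where T: "T \<subseteq> {1..m} - J" "card T = k - card J" "finite T"
    by (rule obtain_subset_with_card_n)
  have "card (J \<union> T) = card J + card T" using T finJ by (intro card_Un_disjoint) auto
  hence cJT: "card (J \<union> T) = k" using T(2) cJ by simp
  have "(\<Union>t\<in>J \<union> T. S t) = {1..n}"
  proof
    show "(\<Union>t\<in>J \<union> T. S t) \<subseteq> {1..n}" using assms(1) Jm T(1) by blast
    show "{1..n} \<subseteq> (\<Union>t\<in>J \<union> T. S t)" using cover by blast
  qed
  moreover have "J \<union> T \<subseteq> {1..m}" using Jm T(1) by blast
  ultimately show ?thesis using cJT by blast
qed

end
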